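(* Consider an open quantum system on a finite-dimensional Hilbert space $\mathcal H$ with Hamiltonian $H$. Let $W_1,\dots,W_N$ be observables commuting with $H$, each positive semidefinite with smallest eigenvalue $0$; for $n\in\{1,\dots,N\}$ let $\widetilde W_n=\sum_{\lambda=1}^nW_\lambda$ and let $d_n$ be the smallest eigenvalue of $\widetilde W_n$. Fix $n<N$. Suppose that with coupling operators $L_1,\dots,L_M$ one has $\mathcal G_M(\widetilde W_n-d_n)\le-c(\widetilde W_n-d_n)$ for some $c>0$, where $\mathcal G_M(X)=\sum_{k=1}^M\mathcal G(X)_{L_k}$. Let $L_{M+1},\dots,L_K$ be additional coupling operators, and let $\mathcal G(X)=\sum_{k=1}^K\mathcal G(X)_{L_k}$ be the generator of the system with all couplings $L_1,\dots,L_K$. If $\mathcal G(W_{n+1})+\sum_{k=M+1}^K\mathcal G(\widetilde W_n)_{L_k}\le -cW_{n+1}+c(d_{n+1}-d_n)$, then $\widetilde W_{n+1}$ is asymptotically ground-state stable for the system with couplings $L_1,\dots,L_K$.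
   Context: With couplings $L_1,\dots,L_K$, the density state (positive semidefinite, trace one) evolves by $\dot\rho_t=-i[H,\rho_t]+\sum_{k=1}^K\big(L_k\rho_tL_k^\dagger-\tfrac12L_k^\dagger L_k\rho_t-\tfrac12\rho_tL_k^\dagger L_k\big)$. Single-channel generator component: $\mathcal G(X)_{L_k}=L_k^\dagger XL_k-\tfrac12L_k^\dagger L_kX-\tfrac12XL_k^\dagger L_k$ (constants are identified with multiples of the identity). For $X$ commuting with $H$, $\frac{d}{dt}\operatorname{tr}(X\rho_t)=\operatorname{tr}(\mathcal G(X)\rho_t)$. An observable $X$ with smallest eigenvalue $d$ is asymptotically ground-state stable if $\operatorname{tr}(X\rho_t)\to d$ as $t\to\infty$ for every initial density state. *)

theory Defs
  imports "HOL-Analysis.Analysis"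
begin

type_synonym 'n cmat = "complex^'n^'n"

definition adj :: "'n::finite cmat \<Rightarrow> 'n cmat" where
  "adj A = (\<chi> i j. cnj (A $ j $ i))"

definition hermitian :: "'n::finite cmat \<Rightarrow> bool" where
  "hermitian A \<longleftrightarrow> adj A = A"

definition csc :: "complex \<Rightarrow> 'n::finite cmat \<Rightarrow> 'n cmat" where
  "csc c A = (\<chi> i j. c * A $ i $ j)"

definition psd :: "'n::finite cmat \<Rightarrow> bool" where
  "psd A \<longleftrightarrow> (\<forall>v::complex^'n.
     let q = (\<Sum>i\<in>UNIV. cnj (v $ i) * (A *v v) $ i) in Im q = 0 \<and> Re q \<ge> 0)"

definition loewner_le :: "'n::finite cmat \<Rightarrow> 'n cmat \<Rightarrow> bool" where
  "loewner_le A B \<longleftrightarrow> psd (B - A)"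

definition eigvals :: "'n::finite cmat \<Rightarrow> real set" where
  "eigvals A = {r. \<exists>v::complex^'n. v \<noteq> 0 \<and> A *v v = complex_of_real r *s v}"

definition min_eig :: "'n::finite cmat \<Rightarrow> real" where
  "min_eig A = Min (eigvals A)"

definition density :: "'n::finite cmat \<Rightarrow> bool" where
  "density \<rho> \<longleftrightarrow> psd \<rho> \<and> trace \<rho> = 1"

definition gen_comp :: "'n::finite cmat \<Rightarrow> 'n cmat \<Rightarrow> 'n cmat" where
  "gen_comp L X = adj L ** X ** L - (1/2) *\<^sub>R (adj L ** L ** X) - (1/2) *\<^sub>R (X ** adj L ** L)"

definition gen :: "(nat \<Rightarrow> 'n::finite cmat) \<Rightarrow> nat set \<Rightarrow> 'n cmat \<Rightarrow> 'n cmat" where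
  "gen L S X = (\<Sum>k\<in>S. gen_comp (L k) X)"

definition lindblad :: "'n::finite cmat \<Rightarrow> (nat \<Rightarrow> 'n cmat) \<Rightarrow> nat \<Rightarrow> 'n cmat \<Rightarrow> 'n cmat" where
  "lindblad H L K \<rho> = csc (- \<i>) (H ** \<rho> - \<rho> ** H)
     + (\<Sum>k\<in>{1..K}. L k ** \<rho> ** adj (L k) - (1/2) *\<^sub>R (adj (L k) ** L k ** \<rho>)
                      - (1/2) *\<^sub>R (\<rho> ** adj (L k) ** L k))"

definition gs_stable :: "'n::finite cmat \<Rightarrow> (nat \<Rightarrow> 'n cmat) \<Rightarrow> nat \<Rightarrow> 'n cmat \<Rightarrow> bool" where
  "gs_stable H L K X \<longleftrightarrow>
     (\<forall>\<rho>::real \<Rightarrow> 'n cmat. density (\<rho> 0) \<and>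
        (\<forall>t\<ge>0. (\<rho> has_vector_derivative lindblad H L K (\<rho> t)) (at t within {0..}))
        \<longrightarrow> ((\<lambda>t. trace (X ** \<rho> t)) \<longlongrightarrow> complex_of_real (min_eig X)) at_top)"

end

theory Submission
  imports Defs
begin


definition cinner :: "complex^'n::finite \<Rightarrow> complex^'n \<Rightarrow> complex" where
  "cinner v w = (\<Sum>i\<in>UNIV. cnj (v$i) * w$i)"

lemma psd_iff: "psd A \<longleftrightarrow> (\<forall>v. Im (cinner v (A *v v)) = 0 \<and> Re (cinner v (A *v v)) \<ge> 0)"
  by (simp add: psd_def cinner_def Let_def)

lemma mm_add_r: "((A::'n::finite cmat) + B) ** C = A ** C + B ** C"
  by (vector matrix_matrix_mult_def sum.distrib distrib_right)
lemma mm_diff_l: "(A::'n::finite cmat) ** (B - C) = A ** B - A ** C"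
  by (vector matrix_matrix_mult_def sum_subtractf right_diff_distrib)
lemma mm_diff_r: "((A::'n::finite cmat) - B) ** C = A ** C - B ** C"
  by (vector matrix_matrix_mult_def sum_subtractf left_diff_distrib)
lemma mm_scaleR_l: "((r::real) *\<^sub>R (A::'n::finite cmat)) ** B = r *\<^sub>R (A ** B)"
  by (simp add: scalar_matrix_assoc)
lemma mm_scaleR_r: "(A::'n::finite cmat) ** ((r::real) *\<^sub>R B) = r *\<^sub>R (A ** B)"
  by (simp add: matrix_scalar_ac scalar_matrix_assoc)
lemma mm_csc_l: "csc c (A::'n::finite cmat) ** B = csc c (A ** B)"
  by (simp add: csc_def matrix_matrix_mult_def vec_eq_iff sum_distrib_left mult.assoc)
lemma mm_csc_r: "(A::'n::finite cmat) ** csc c B = csc c (A ** B)"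
  by (simp add: csc_def matrix_matrix_mult_def vec_eq_iff sum_distrib_left mult_ac)
lemma mm_sum_l: "(\<Sum>k\<in>S. (A k::'n::finite cmat)) ** B = (\<Sum>k\<in>S. A k ** B)"
  by (induct S rule: infinite_finite_induct) (auto simp: mm_add_r)
lemma mm_sum_r: "(B::'n::finite cmat) ** (\<Sum>k\<in>S. A k) = (\<Sum>k\<in>S. B ** A k)"
  by (induct S rule: infinite_finite_induct) (auto simp: matrix_add_ldistrib)
lemma mat_mm: "mat c ** (A::'n::finite cmat) = csc c A"
  by (simp add: matrix_matrix_mult_def mat_def csc_def vec_eq_iff if_distrib if_distribR cong: if_cong)
lemma mm_mat: "(A::'n::finite cmat) ** mat c = csc c A"
  by (simp add: matrix_matrix_mult_def mat_def csc_def vec_eq_iff if_distrib if_distribR mult.commute cong: if_cong)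

lemma csc_add: "csc c (A + B) = csc c A + csc c (B::'n::finite cmat)"
  by (simp add: csc_def vec_eq_iff algebra_simps)
lemma csc_diff: "csc c (A - B) = csc c A - csc c (B::'n::finite cmat)"
  by (simp add: csc_def vec_eq_iff algebra_simps)

lemma adj_adj[simp]: "adj (adj A) = A" by (simp add: adj_def vec_eq_iff)
lemma adj_add: "adj (A + B) = adj A + adj B" by (simp add: adj_def vec_eq_iff)
lemma adj_diff: "adj (A - B) = adj A - adj B" by (simp add: adj_def vec_eq_iff)
lemma adj_scaleR: "adj ((r::real) *\<^sub>R A) = r *\<^sub>R adj A" by (simp add: adj_def vec_eq_iff)
lemma adj_csc: "adj (csc c A) = csc (cnj c) (adj A)" by (simp add: adj_def csc_def vec_eq_iff)
lemma adj_mm: "adj (A ** B) = adj B ** adj (A::'n::finite cmat)"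
  by (simp add: adj_def matrix_matrix_mult_def vec_eq_iff mult.commute)
lemma adj_sum: "adj (\<Sum>k\<in>S. A k) = (\<Sum>k\<in>S. adj (A k))"
  by (induct S rule: infinite_finite_induct) (auto simp: adj_add adj_def vec_eq_iff)
lemma adj_mat: "adj (mat c) = mat (cnj c)" by (simp add: adj_def mat_def vec_eq_iff)

lemma trace_csc: "trace (csc c A) = c * trace A"
  by (simp add: trace_def csc_def sum_distrib_left)
lemma trace_scaleR: "trace ((r::real) *\<^sub>R (A::'n::finite cmat)) = r *\<^sub>R trace A"
  by (simp add: trace_def scaleR_sum_right)
lemma trace_sum: "trace (\<Sum>k\<in>S. (A k::'n::finite cmat)) = (\<Sum>k\<in>S. trace (A k))"
  by (induct S rule: infinite_finite_induct) (auto simp: trace_add trace_0[simplified])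

lemma mv_csc: "csc c A *v v = c *s (A *v (v::complex^'n::finite))"
  by (simp add: csc_def matrix_vector_mult_def vec_eq_iff sum_distrib_left mult.assoc)
lemma mv_scaleR: "((r::real) *\<^sub>R A) *v v = r *\<^sub>R (A *v (v::complex^'n::finite))"
  by (simp add: matrix_vector_mult_def vec_eq_iff scaleR_sum_right)
lemma mv_sum: "(\<Sum>k\<in>S. A k) *v (v::complex^'n::finite) = (\<Sum>k\<in>S. A k *v v)"
  by (induct S rule: infinite_finite_induct) (auto simp: matrix_vector_mult_add_rdistrib)
lemma mv_mat: "mat c *v (v::complex^'n::finite) = c *s v"
  by (simp add: matrix_vector_mult_def mat_def vec_eq_iff if_distrib if_distribR cong: if_cong)

lemma cinner_add: "cinner v (w1 + w2) = cinner v w1 + cinner v w2"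
  by (simp add: cinner_def sum.distrib algebra_simps)
lemma cinner_diff: "cinner v (w1 - w2) = cinner v w1 - cinner v w2"
  by (simp add: cinner_def sum_subtractf algebra_simps)
lemma cinner_add_l: "cinner (w1 + w2) v = cinner w1 v + cinner w2 v"
  by (simp add: cinner_def sum.distrib algebra_simps)
lemma cinner_smult: "cinner v (c *s w) = c * cinner v w"
  by (simp add: cinner_def sum_distrib_left mult_ac)
lemma cinner_smult_l: "cinner (c *s v) w = cnj c * cinner v w"
  by (simp add: cinner_def sum_distrib_left mult_ac)
lemma cinner_scaleR: "cinner v ((r::real) *\<^sub>R w) = r *\<^sub>R cinner v w"
  by (simp add: cinner_def scaleR_sum_right)
lemma cinner_zero[simp]: "cinner v 0 = 0" "cinner 0 v = 0" by (simp_all add: cinner_def)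
lemma cinner_sum: "cinner v (\<Sum>k\<in>S. w k) = (\<Sum>k\<in>S. cinner v (w k))"
  by (induct S rule: infinite_finite_induct) (auto simp: cinner_add)
lemma cinner_cnj: "cinner w v = cnj (cinner v w)"
  by (simp add: cinner_def mult.commute)
lemma cinner_adj: "cinner v (A *v w) = cinner (adj A *v v) w"
  apply (simp add: cinner_def adj_def matrix_vector_mult_def sum_distrib_left sum_distrib_right)
  apply (subst sum.swap)
  apply (simp add: mult_ac)
  done
lemma cinner_self: "cinner v v = complex_of_real ((norm v)^2)"
proof -
  have "cinner v v = (\<Sum>i\<in>UNIV. complex_of_real ((cmod (v$i))^2))"
    unfolding cinner_def apply (intro sum.cong refl)
    subgoal for i using complex_norm_square[of "v$i"] by (simp add: mult.commute)
    done
  also have "\<dots> = complex_of_real ((norm v)^2)"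
  proof -
    have "(norm v)^2 = (\<Sum>i\<in>UNIV. (norm (v$i))^2)"
      unfolding norm_vec_def L2_set_def by (rule real_sqrt_pow2) (simp add: sum_nonneg)
    then show ?thesis by (simp only: of_real_sum)
  qed
  finally show ?thesis .
qed
lemma mv_assoc: "(A ** B) *v v = A *v (B *v (v::complex^'n::finite))"
  by (rule matrix_vector_mul_assoc[symmetric])



lemma cinner_scaleR_l: "cinner ((r::real) *\<^sub>R v) w = r *\<^sub>R cinner v w"
  by (simp add: cinner_def scaleR_sum_right vector_scaleR_component mult_scaleR_left mult_scaleR_right)
lemma mv_scaleR_r: "A *v ((r::real) *\<^sub>R v) = r *\<^sub>R (A *v (v::complex^'n::finite))"
  by (simp add: matrix_vector_mult_def vec_eq_iff scaleR_sum_right vector_scaleR_component mult_scaleR_left mult_scaleR_right)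
lemma mv_smult_r: "A *v (c *s v) = c *s (A *v (v::complex^'n::finite))"
  by (simp add: matrix_vector_mult_def vec_eq_iff sum_distrib_left mult_ac)
lemma cinner_axis_l: "cinner (axis j a) w = cnj a * w$j"
  by (simp add: cinner_def axis_def if_distrib if_distribR cong: if_cong)
lemma mv_axis: "(B *v axis k b) $ i = B$i$k * (b::complex)"
  by (simp add: matrix_vector_mult_def axis_def if_distrib if_distribR cong: if_cong)

lemma herm_cinner: "hermitian A \<Longrightarrow> cinner v (A *v w) = cinner (A *v v) w"
  by (simp add: hermitian_def cinner_adj)

lemma zero_form:
  fixes B :: "'n::finite cmat"
  assumes "\<And>v. cinner v (B *v v) = 0"
  shows "B = 0"
proof -
  have e: "cinner (axis j a) (B *v axis k b) = cnj a * B$j$k * b" for j k a b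
    by (simp add: cinner_axis_l mv_axis)
  have d: "B$j$j = 0" for j using assms[of "axis j 1"] e[of j 1 j 1] by simp
  have q: "cinner (axis j 1 + axis k x) (B *v (axis j 1 + axis k x)) = B$j$j + x * B$j$k + cnj x * B$k$j + cnj x * x * B$k$k" for j k x
    by (simp add: matrix_vector_right_distrib cinner_add cinner_add_l e mult_ac)
  have "B$j$k = 0" for j k
  proof -
    have 1: "B$j$k + B$k$j = 0" using assms[of "axis j 1 + axis k 1"] q[of j k 1] d by simp
    have 2: "\<i> * B$j$k - \<i> * B$k$j = 0" using assms[of "axis j 1 + axis k \<i>"] q[of j k \<i>] d by simp
    have "\<i> * (B$j$k - B$k$j) = 0" using 2 by (simp add: right_diff_distrib)
    hence 3: "B$j$k = B$k$j" by simp
    from 1 3 have "2 * B$j$k = 0" by simp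
    thus ?thesis by simp
  qed
  then show ?thesis by (simp add: vec_eq_iff)
qed

lemma psd_herm: assumes "psd A" shows "hermitian A"
proof -
  have "A - adj A = 0"
  proof (rule zero_form)
    fix v
    have "cinner v (adj A *v v) = cnj (cinner v (A *v v))"
      using cinner_adj[of v "adj A" v] cinner_cnj[of "A *v v" v] by simp
    moreover have "Im (cinner v (A *v v)) = 0" using assms by (simp add: psd_iff)
    ultimately show "cinner v ((A - adj A) *v v) = 0"
      by (simp add: matrix_vector_mult_diff_rdistrib cinner_diff complex_eq_iff)
  qed
  then show ?thesis by (simp add: hermitian_def)
qed

lemma psd_kernel:
  assumes P: "psd Q" and z: "cinner v (Q *v v) = 0"
  shows "Q *v v = 0"
proof -
  have h: "hermitian Q" using P psd_herm by blast
  define w where "w = Q *v v"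
  define N where "N = (norm w)^2"
  define a where "a = Re (cinner w (Q *v w))"
  have a0: "a \<ge> 0" using P by (simp add: psd_iff a_def)
  have c1: "cinner w (Q *v v) = of_real N" by (simp add: w_def N_def cinner_self)
  have c2: "cinner v (Q *v w) = of_real N" using herm_cinner[OF h, of v w] by (simp add: w_def N_def cinner_self)
  have expand: "Re (cinner (v + s *\<^sub>R w) (Q *v (v + s *\<^sub>R w))) = 2 * s * N + s^2 * a" for s :: real
    using z c1 c2
    by (simp add: matrix_vector_right_distrib mv_scaleR_r cinner_add cinner_add_l cinner_scaleR cinner_scaleR_l
        a_def power2_eq_square algebra_simps)
  have "N \<le> 0"
  proof (rule ccontr)
    assume "\<not> N \<le> 0"
    hence Np: "N > 0" by simp
    define s where "s = - N / (a + 1)"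
    have ap: "a + 1 \<noteq> 0" using a0 by simp
    have u: "s * (a + 1) = - N" using ap by (simp add: s_def)
    have "Re (cinner (v + s *\<^sub>R w) (Q *v (v + s *\<^sub>R w))) \<ge> 0" using P by (simp add: psd_iff)
    hence x0: "2 * s * N + s^2 * a \<ge> 0" by (simp add: expand)
    have "(a+1)^2 * (2 * s * N + s^2 * a) = 2*(a+1)*(s*(a+1))*N + (s*(a+1))^2 * a"
      by (simp add: power2_eq_square algebra_simps)
    also have "\<dots> = -(N^2) * (a + 2)" unfolding u by (simp add: power2_eq_square algebra_simps)
    finally have "(a+1)^2 * (2 * s * N + s^2 * a) < 0" using Np a0 by (simp add: mult_pos_pos)
    moreover have "(a+1)^2 * (2 * s * N + s^2 * a) \<ge> 0" using x0 by simp
    ultimately show False by linarith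
  qed
  hence "norm w = 0" by (simp add: N_def)
  thus ?thesis by (simp add: w_def)
qed



definition outer :: "complex^'n::finite \<Rightarrow> 'n cmat" where
  "outer c = (\<chi> j k. c$j * cnj (c$k))"

lemma herm_entry: "hermitian P \<Longrightarrow> P$j$k = cnj (P$k$j)"
  unfolding hermitian_def adj_def by (metis (no_types, lifting) vec_lambda_beta complex_cnj_cnj)

lemma trace_outer: "trace (outer c ** \<rho>) = cinner c (\<rho> *v c)"
  apply (simp add: trace_def outer_def matrix_matrix_mult_def cinner_def matrix_vector_mult_def
      sum_distrib_left)
  apply (subst sum.swap)
  apply (simp add: mult_ac)
  done

lemma outer_mv: "outer c *v v = cinner c v *s c"
  by (simp add: outer_def matrix_vector_mult_def cinner_def vec_eq_iff sum_distrib_left mult_ac)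

lemma trace_psd_aux:
  fixes \<rho> :: "'n::finite cmat"
  assumes r: "psd \<rho>" and S: "finite S"
  shows "\<forall>P. psd P \<and> (\<forall>j k. j \<notin> S \<or> k \<notin> S \<longrightarrow> P$j$k = 0) \<longrightarrow>
           Im (trace (P ** \<rho>)) = 0 \<and> Re (trace (P ** \<rho>)) \<ge> 0"
  using S
proof (induction S rule: finite_induct)
  case empty
  show ?case
  proof (intro allI impI)
    fix P :: "'n cmat" assume "psd P \<and> (\<forall>j k. j \<notin> {} \<or> k \<notin> {} \<longrightarrow> P$j$k = 0)"
    hence "P = 0" by (simp add: vec_eq_iff)
    thus "Im (trace (P ** \<rho>)) = 0 \<and> Re (trace (P ** \<rho>)) \<ge> 0" by (simp add: trace_def)
  qed
next
  case (insert i S)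
  show ?case
  proof (intro allI impI)
    fix P :: "'n cmat"
    assume A: "psd P \<and> (\<forall>j k. j \<notin> insert i S \<or> k \<notin> insert i S \<longrightarrow> P$j$k = 0)"
    hence P: "psd P" and sup: "\<And>j k. j \<notin> insert i S \<or> k \<notin> insert i S \<Longrightarrow> P$j$k = 0" by auto
    have h: "hermitian P" using P psd_herm by blast
    define e :: "complex^'n" where "e = axis i 1"
    define c where "c = P *v e"
    define a where "a = P$i$i"
    have cj: "c$j = P$j$i" for j by (simp add: c_def e_def mv_axis)
    have ae: "cinner e (P *v e) = a" by (simp add: e_def a_def cinner_axis_l mv_axis)
    have aIm: "Im a = 0" and aRe: "Re a \<ge> 0" using P ae by (auto simp: psd_iff)
    show "Im (trace (P ** \<rho>)) = 0 \<and> Re (trace (P ** \<rho>)) \<ge> 0"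
    proof (cases "a = 0")
      case True
      hence "c = 0" using psd_kernel[OF P, of e] ae by (simp add: c_def)
      hence col: "P$j$i = 0" for j using cj by (metis zero_index)
      have "\<forall>j k. j \<notin> S \<or> k \<notin> S \<longrightarrow> P$j$k = 0"
      proof (intro allI impI)
        fix j k assume "j \<notin> S \<or> k \<notin> S"
        then consider "j = i" | "k = i" | "j \<notin> insert i S \<or> k \<notin> insert i S" by auto
        then show "P$j$k = 0"
        proof cases
          case 1 thus ?thesis using herm_entry[OF h, of i k] col[of k] by simp
        next
          case 2 thus ?thesis using col by simp
        next
          case 3 thus ?thesis using sup by blast
        qed
      qed
      thus ?thesis using insert.IH P by blast
    next
      case False
      have ca: "cnj a = a" using aIm by (simp add: complex_eq_iff)
      have aRp: "Re a > 0" using False aRe aIm by (metis complex_eq_iff zero_complex.simps less_eq_real_def)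
      define P' where "P' = P - csc (1/a) (outer c)"
      have P'e: "P'$j$k = P$j$k - P$j$i * cnj (P$k$i) / a" for j k
        by (simp add: P'_def csc_def outer_def cj)
      have supp: "\<forall>j k. j \<notin> S \<or> k \<notin> S \<longrightarrow> P'$j$k = 0"
      proof (intro allI impI)
        fix j k assume "j \<notin> S \<or> k \<notin> S"
        then consider "j = i" | "k = i" | "j \<notin> insert i S \<or> k \<notin> insert i S" by auto
        then show "P'$j$k = 0"
        proof cases
          case 1
          have "P$i$k = cnj (P$k$i)" using herm_entry[OF h] by blast
          thus ?thesis using 1 False by (simp add: P'e a_def[symmetric])
        next
          case 2
          thus ?thesis using False ca by (simp add: P'e a_def[symmetric])
        next
          case 3
          hence "P$j$k = 0" using sup by blast
          moreover have "P$j$i * cnj (P$k$i) = 0" using 3 sup by auto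
          ultimately show ?thesis by (simp add: P'e)
        qed
      qed
      have psdP': "psd P'"
        unfolding psd_iff
      proof
        fix v
        define \<beta> where "\<beta> = cinner c v"
        define \<alpha> where "\<alpha> = - \<beta> / a"
        define w where "w = v + \<alpha> *s e"
        have c1: "cinner v (P *v e) = cnj \<beta>" using cinner_cnj[of v c] by (simp add: \<beta>_def c_def)
        have c2: "cinner e (P *v v) = \<beta>" by (simp add: herm_cinner[OF h] \<beta>_def c_def)
        have "cinner w (P *v w) = cinner v (P *v v) + \<alpha> * cnj \<beta> + cnj \<alpha> * \<beta>
              + cnj \<alpha> * \<alpha> * a"
          by (simp add: w_def matrix_vector_right_distrib mv_smult_r cinner_add cinner_add_l cinner_smult
              cinner_smult_l c1 c2 ae mult_ac distrib_left)
        also have "\<dots> = cinner v (P *v v) - \<beta> * cnj \<beta> / a"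
          using False ca by (simp add: \<alpha>_def field_simps)
        also have "\<dots> = cinner v (P' *v v)"
          by (simp add: P'_def matrix_vector_mult_diff_rdistrib mv_csc outer_mv cinner_diff cinner_smult
              \<beta>_def cinner_cnj[of v c] mult_ac)
        finally have "cinner v (P' *v v) = cinner w (P *v w)" ..
        thus "Im (cinner v (P' *v v)) = 0 \<and> Re (cinner v (P' *v v)) \<ge> 0" using P by (simp add: psd_iff)
      qed
      have IH: "Im (trace (P' ** \<rho>)) = 0 \<and> Re (trace (P' ** \<rho>)) \<ge> 0"
        using insert.IH psdP' supp by blast
      have tr: "trace (P ** \<rho>) = trace (P' ** \<rho>) + (1/a) * cinner c (\<rho> *v c)"
        by (simp add: P'_def mm_diff_r mm_csc_l trace_sub trace_csc trace_outer)
      have q: "Im (cinner c (\<rho> *v c)) = 0" "Re (cinner c (\<rho> *v c)) \<ge> 0" using r by (auto simp: psd_iff)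
      have "Im (cinner c (\<rho> *v c) / a) = 0" using aIm q by (simp add: Im_divide)
      moreover have "Re (cinner c (\<rho> *v c) / a) \<ge> 0" using aIm q aRp by (simp add: Re_divide)
      ultimately show ?thesis using IH by (simp add: tr)
    qed
  qed
qed

lemma trace_psd:
  fixes P \<rho> :: "'n::finite cmat"
  assumes "psd P" "psd \<rho>"
  shows "Im (trace (P ** \<rho>)) = 0" "Re (trace (P ** \<rho>)) \<ge> 0"
  using trace_psd_aux[OF assms(2), of UNIV] assms(1) by auto



lemma continuous_on_vec_nth': "continuous_on S f \<Longrightarrow> continuous_on S (\<lambda>x. f x $ i)"
  unfolding continuous_on_def by (auto intro: tendsto_vec_nth)

lemma qexp: "cinner v (M *v w) = (\<Sum>i\<in>UNIV. \<Sum>j\<in>UNIV. cnj (v$i) * M$i$j * w$j)"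
  by (simp add: cinner_def matrix_vector_mult_def sum_distrib_left mult.assoc)

lemma continuous_on_cform:
  fixes g :: "'a::topological_space \<Rightarrow> complex^'n::finite" and M :: "'a \<Rightarrow> 'n cmat"
  assumes "continuous_on S g" "continuous_on S M"
  shows "continuous_on S (\<lambda>p. cinner (g p) (M p *v g p))"
  unfolding qexp
  by (intro continuous_intros continuous_on_vec_nth' assms)

lemma inner_cinner: "inner x y = Re (cinner x (y::complex^'n::finite))"
  by (simp add: inner_vec_def cinner_def inner_complex_def Re_sum)

lemma herm_qf_real: "hermitian A \<Longrightarrow> Im (cinner v (A *v v)) = 0"
  using herm_cinner[of A v v] cinner_cnj[of "A *v v" v]
  by (metis cnj.simps(2) neg_equal_zero)

lemma cinner_scaleR_both: "cinner ((r::real) *\<^sub>R v) (A *v (r *\<^sub>R v)) = (r^2) *\<^sub>R cinner v (A *v v)"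
  by (simp add: mv_scaleR_r cinner_scaleR cinner_scaleR_l power2_eq_square)

lemma mat_sub_qf: "cinner v ((A - mat c) *v v) = cinner v (A *v v) - c * complex_of_real ((norm v)^2)"
  by (simp add: matrix_vector_mult_diff_rdistrib mv_mat cinner_diff cinner_smult cinner_self)

lemma herm_min_eig:
  fixes A :: "'n::finite cmat"
  assumes h: "hermitian A"
  shows "psd (A - mat (complex_of_real (min_eig A)))"
proof -
  let ?f = "\<lambda>v. Re (cinner v (A *v v))"
  have cont: "continuous_on (sphere 0 1) ?f"
    by (intro continuous_intros continuous_on_cform continuous_on_id continuous_on_const)
  obtain u where u: "u \<in> sphere (0::complex^'n) 1" and umin: "\<forall>y\<in>sphere 0 1. ?f u \<le> ?f y"
    using continuous_attains_inf[OF compact_sphere _ cont] by auto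
  define l where "l = ?f u"
  define B where "B = A - mat (complex_of_real l)"
  have lb: "Re (cinner v (A *v v)) \<ge> l * (norm v)^2" for v
  proof (cases "v = 0")
    case True thus ?thesis by simp
  next
    case False
    define x where "x = (1 / norm v) *\<^sub>R v"
    have x: "x \<in> sphere 0 1" using False by (simp add: x_def)
    have v: "v = norm v *\<^sub>R x" using False by (simp add: x_def)
    have "Re (cinner v (A *v v)) = (norm v)^2 * ?f x"
      by (subst v, subst (2) v) (simp add: cinner_scaleR_both)
    moreover have "?f x \<ge> l" using umin x by (simp add: l_def)
    ultimately show ?thesis by (metis mult.commute mult_right_mono zero_le_power2)
  qed
  have psdB: "psd B"
    unfolding psd_iff
  proof
    fix v
    show "Im (cinner v (B *v v)) = 0 \<and> Re (cinner v (B *v v)) \<ge> 0"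
      using herm_qf_real[OF h, of v] lb[of v] by (simp add: B_def mat_sub_qf)
  qed
  have "norm u = 1" using u by simp
  hence "cinner u (B *v u) = 0" by (simp add: B_def mat_sub_qf l_def complex_eq_iff herm_qf_real[OF h])
  hence "B *v u = 0" using psd_kernel[OF psdB] by blast
  hence Au: "A *v u = complex_of_real l *s u"
    by (simp add: B_def matrix_vector_mult_diff_rdistrib mv_mat)
  have u0: "u \<noteq> 0" using u by auto
  have lin: "l \<in> eigvals A" unfolding eigvals_def using Au u0 by blast
  have lmin: "l \<le> r" if rr: "r \<in> eigvals A" for r
  proof -
    obtain w where w: "w \<noteq> 0" "A *v w = complex_of_real r *s w" using rr by (auto simp: eigvals_def)
    have "Re (cinner w (A *v w)) = r * (norm w)^2" using w(2) by (simp add: cinner_smult cinner_self)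
    with lb[of w] have "l * (norm w)^2 \<le> r * (norm w)^2" by simp
    thus ?thesis using w(1) by simp
  qed
  have fin: "finite (eigvals A)"
  proof -
    define g where "g r = (SOME v. v \<noteq> 0 \<and> A *v v = complex_of_real r *s v)" for r
    have g: "g r \<noteq> 0 \<and> A *v g r = complex_of_real r *s g r" if "r \<in> eigvals A" for r
      using that unfolding eigvals_def g_def by (rule CollectE) (rule someI_ex)
    have orth: "cinner (g s) (g r) = 0" if "r \<in> eigvals A" "s \<in> eigvals A" "r \<noteq> s" for r s
    proof -
      have "complex_of_real r * cinner (g s) (g r) = cinner (g s) (A *v g r)"
        using g[OF that(1)] by (simp add: cinner_smult)
      also have "\<dots> = cinner (A *v g s) (g r)" by (rule herm_cinner[OF h])
      also have "\<dots> = complex_of_real s * cinner (g s) (g r)"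
        using g[OF that(2)] by (simp add: cinner_smult_l)
      finally have "(complex_of_real r - complex_of_real s) * cinner (g s) (g r) = 0"
        by (simp add: algebra_simps)
      thus ?thesis using that(3) by simp
    qed
    have inj: "inj_on g (eigvals A)"
    proof (rule inj_onI)
      fix r s assume rs: "r \<in> eigvals A" "s \<in> eigvals A" "g r = g s"
      show "r = s"
      proof (rule ccontr)
        assume "r \<noteq> s"
        hence "cinner (g r) (g r) = 0" using orth[OF rs(1,2)] rs(3) by simp
        thus False using g[OF rs(1)] by (simp add: cinner_self)
      qed
    qed
    have "pairwise orthogonal (g ` eigvals A)"
      unfolding pairwise_def orthogonal_def
    proof (clarsimp simp: inner_cinner)
      fix x y assume "x \<in> eigvals A" "y \<in> eigvals A" "g x \<noteq> g y"
      moreover hence "x \<noteq> y" by auto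
      ultimately show "Re (cinner (g x) (g y)) = 0" using orth[of y x] by simp
    qed
    moreover have "0 \<notin> g ` eigvals A" using g by auto
    ultimately have "independent (g ` eigvals A)" by (rule pairwise_orthogonal_independent)
    hence "finite (g ` eigvals A)" by (rule finiteI_independent)
    thus ?thesis using inj finite_imageD by blast
  qed
  have "min_eig A = l" unfolding min_eig_def using fin lin lmin by (intro Min_eqI) auto
  thus ?thesis using psdB by (simp add: B_def)
qed



lemma mono_deriv:
  fixes h h' :: "real \<Rightarrow> real"
  assumes d: "\<And>t. t \<ge> 0 \<Longrightarrow> (h has_real_derivative h' t) (at t within {0..})"
    and n: "\<And>t. t \<ge> 0 \<Longrightarrow> h' t \<le> 0" and t: "t \<ge> 0"
  shows "h t \<le> h 0"
proof -
  have "\<exists>x\<in>{0..t}. h t - h 0 = (\<lambda>d. h' x * d) (t - 0)"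
  proof (rule mvt_very_simple[OF t])
    fix x assume x: "0 \<le> x" "x \<le> t"
    have "(h has_real_derivative h' x) (at x within {0..t})"
      using has_field_derivative_subset[OF d[OF x(1)]] by auto
    thus "(h has_derivative (\<lambda>d. h' x * d)) (at x within {0..t})"
      by (simp add: has_field_derivative_def)
  qed
  then obtain x where x: "x \<in> {0..t}" "h t - h 0 = h' x * t" by auto
  have "h' x * t \<le> 0" using n[of x] x(1) t by (simp add: mult_nonpos_nonneg)
  thus ?thesis using x(2) by simp
qed

lemma gronwall:
  fixes f f' :: "real \<Rightarrow> real"
  assumes d: "\<And>t. t \<ge> 0 \<Longrightarrow> (f has_real_derivative f' t) (at t within {0..})"
    and n: "\<And>t. t \<ge> 0 \<Longrightarrow> f' t \<le> k * f t" and t: "t \<ge> 0"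
  shows "f t \<le> exp (k * t) * f 0"
proof -
  define h where "h s = exp (- k * s) * f s" for s
  have hd: "(h has_real_derivative (exp (- k * s) * (f' s - k * f s))) (at s within {0..})" if "s \<ge> 0" for s
    unfolding h_def
    by (rule derivative_eq_intros refl d[OF that])+ (simp add: algebra_simps)
  have "h t \<le> h 0"
    by (rule mono_deriv[OF hd]) (use n t in \<open>auto simp: mult_nonneg_nonpos\<close>)
  hence "exp (- k * t) * f t \<le> f 0" by (simp add: h_def)
  hence "exp (k * t) * (exp (- k * t) * f t) \<le> exp (k * t) * f 0" by (simp add: mult_left_mono)
  thus ?thesis by (simp add: exp_minus_inverse mult.assoc[symmetric] exp_add[symmetric])
qed

lemma lin_ode_zero:
  fixes X :: "real \<Rightarrow> 'a::real_inner" and \<Lambda> :: "'a \<Rightarrow> 'a"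
  assumes bl: "bounded_linear \<Lambda>" and X0: "X 0 = 0"
    and d: "\<And>t. t \<ge> 0 \<Longrightarrow> (X has_vector_derivative \<Lambda> (X t)) (at t within {0..})"
    and t: "t \<ge> 0"
  shows "X t = 0"
proof -
  obtain C where C: "C > 0" "\<And>x. norm (\<Lambda> x) \<le> norm x * C" using bounded_linear.pos_bounded[OF bl] by blast
  define f where "f s = X s \<bullet> X s" for s
  have fd: "(f has_real_derivative (2 * (X s \<bullet> \<Lambda> (X s)))) (at s within {0..})" if "s \<ge> 0" for s
  proof -
    have "(f has_vector_derivative (X s \<bullet> \<Lambda> (X s) + \<Lambda> (X s) \<bullet> X s)) (at s within {0..})"
      unfolding f_def by (rule bounded_bilinear.has_vector_derivative[OF bounded_bilinear_inner d[OF that] d[OF that]])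
    thus ?thesis by (simp add: has_real_derivative_iff_has_vector_derivative inner_commute)
  qed
  have fn: "2 * (X s \<bullet> \<Lambda> (X s)) \<le> (2 * C) * f s" if "s \<ge> 0" for s
  proof -
    have "X s \<bullet> \<Lambda> (X s) \<le> norm (X s) * norm (\<Lambda> (X s))" by (rule norm_cauchy_schwarz)
    also have "\<dots> \<le> norm (X s) * (norm (X s) * C)" by (rule mult_left_mono[OF C(2)]) simp
    also have "\<dots> = C * f s" by (simp add: f_def power2_norm_eq_inner[symmetric] power2_eq_square)
    finally show ?thesis by simp
  qed
  have "f t \<le> exp ((2 * C) * t) * f 0" by (rule gronwall[OF fd fn t])
  hence "f t \<le> 0" by (simp add: f_def X0)
  thus ?thesis unfolding f_def by (metis inner_eq_zero_iff order_antisym inner_ge_zero)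
qed



lemma csc_scaleR: "csc c ((r::real) *\<^sub>R A) = r *\<^sub>R csc c (A::'n::finite cmat)"
  by (simp add: csc_def vec_eq_iff scaleR_conv_of_real mult_ac)

lemma lindblad_add: "lindblad H L K (X + Y) = lindblad H L K X + lindblad H L K Y"
  unfolding lindblad_def
  by (simp add: matrix_add_ldistrib mm_add_r csc_add csc_diff scaleR_add_right sum.distrib[symmetric] algebra_simps)

lemma lindblad_scaleR: "lindblad H L K ((r::real) *\<^sub>R X) = r *\<^sub>R lindblad H L K X"
  unfolding lindblad_def
  by (simp add: mm_scaleR_l mm_scaleR_r csc_scaleR csc_diff scaleR_sum_right algebra_simps)

lemma bl_lindblad: "bounded_linear (lindblad H L K)"
  by (rule linear_conv_bounded_linear[THEN iffD1], rule linearI) (simp_all add: lindblad_add lindblad_scaleR)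

lemma bl_adj: "bounded_linear (adj :: 'n::finite cmat \<Rightarrow> 'n cmat)"
  by (rule linear_conv_bounded_linear[THEN iffD1], rule linearI) (simp_all add: adj_add adj_scaleR)

lemma bl_trace_mul: "bounded_linear (\<lambda>X. trace ((Y::'n::finite cmat) ** X))"
  by (rule linear_conv_bounded_linear[THEN iffD1], rule linearI)
     (simp_all add: matrix_add_ldistrib trace_add mm_scaleR_r trace_scaleR)

lemma csc_swap: "csc c (A - B) = csc (- c) (B - (A::'n::finite cmat))"
  by (simp add: csc_def vec_eq_iff algebra_simps)

lemma lindblad_adj:
  assumes h: "hermitian H"
  shows "lindblad H L K (adj X) = adj (lindblad H L K X)"
proof -
  have hH: "adj H = H" using h by (simp add: hermitian_def)
  show ?thesis
    unfolding lindblad_def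
    by (simp add: adj_add adj_diff adj_csc adj_mm adj_scaleR adj_sum hH matrix_mul_assoc csc_swap[of "\<i>"])
      (rule sum.cong[OF refl], simp add: diff_diff_eq add.commute)
qed

lemma trace_lindblad: "trace (lindblad H L K X) = 0"
proof -
  have t1: "trace (csc (- \<i>) (H ** X - X ** H)) = 0"
    by (simp add: trace_csc trace_sub trace_mul_sym[of H X])
  have t2: "trace (L k ** X ** adj (L k) - (1/2) *\<^sub>R (adj (L k) ** L k ** X)
                      - (1/2) *\<^sub>R (X ** adj (L k) ** L k)) = 0" for k
  proof -
    have a: "trace (L k ** X ** adj (L k)) = trace (adj (L k) ** L k ** X)"
      by (metis trace_mul_sym matrix_mul_assoc)
    have b: "trace (X ** adj (L k) ** L k) = trace (adj (L k) ** L k ** X)"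
      by (metis trace_mul_sym matrix_mul_assoc)
    show ?thesis by (simp add: trace_sub trace_scaleR a b)
  qed
  show ?thesis unfolding lindblad_def by (simp add: trace_add trace_sum t1 t2)
qed

lemma trace_dual:
  assumes c: "Y ** H = H ** Y"
  shows "trace (Y ** lindblad H L K X) = trace (gen L {1..K} Y ** X)"
proof -
  have t1: "trace (Y ** csc (- \<i>) (H ** X - X ** H)) = 0"
  proof -
    have "trace (Y ** (X ** H)) = trace (H ** Y ** X)" by (metis trace_mul_sym matrix_mul_assoc)
    also have "\<dots> = trace (Y ** H ** X)" by (simp add: c)
    finally show ?thesis by (simp add: mm_csc_r trace_csc mm_diff_l trace_sub matrix_mul_assoc)
  qed
  have t2: "trace (Y ** (L k ** X ** adj (L k) - (1/2) *\<^sub>R (adj (L k) ** L k ** X)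
                      - (1/2) *\<^sub>R (X ** adj (L k) ** L k))) = trace (gen_comp (L k) Y ** X)" for k
  proof -
    have a: "trace (Y ** L k ** X ** adj (L k)) = trace (adj (L k) ** Y ** L k ** X)"
      by (metis trace_mul_sym matrix_mul_assoc)
    have b: "trace (Y ** X ** adj (L k) ** L k) = trace (adj (L k) ** L k ** Y ** X)"
      by (metis trace_mul_sym matrix_mul_assoc)
    show ?thesis
      by (simp add: gen_comp_def mm_diff_l mm_diff_r mm_scaleR_l mm_scaleR_r trace_sub trace_scaleR a b matrix_mul_assoc)
  qed
  show ?thesis
    unfolding lindblad_def gen_def
    by (simp add: matrix_add_ldistrib trace_add mm_sum_r mm_sum_l trace_sum t1 t2)
qed



lemma bl_trace: "bounded_linear (trace :: 'n::finite cmat \<Rightarrow> complex)"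
  by (rule linear_conv_bounded_linear[THEN iffD1], rule linearI) (simp_all add: trace_add trace_scaleR)

lemma bl_qv: "bounded_linear (\<lambda>M::'n::finite cmat. Re (cinner v (M *v v)))"
  by (rule linear_conv_bounded_linear[THEN iffD1], rule linearI)
     (simp_all add: matrix_vector_mult_add_rdistrib mv_scaleR cinner_add cinner_scaleR)

lemma lindblad_diff: "lindblad H L K (X - Y) = lindblad H L K X - lindblad H L K Y"
  using lindblad_add[of H L K "X - Y" Y] by (simp add: algebra_simps)

lemma herm_pres:
  fixes \<rho> :: "real \<Rightarrow> 'n::finite cmat"
  assumes h: "hermitian H"
    and d: "\<And>t. t \<ge> 0 \<Longrightarrow> (\<rho> has_vector_derivative lindblad H L K (\<rho> t)) (at t within {0..})"
    and h0: "hermitian (\<rho> 0)" and t: "t \<ge> 0"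
  shows "hermitian (\<rho> t)"
proof -
  define X where "X s = \<rho> s - adj (\<rho> s)" for s
  have "X t = 0"
  proof (rule lin_ode_zero[OF bl_lindblad])
    show "X 0 = 0" using h0 by (simp add: X_def hermitian_def)
    fix s :: real assume s: "s \<ge> 0"
    have "(X has_vector_derivative (lindblad H L K (\<rho> s) - adj (lindblad H L K (\<rho> s)))) (at s within {0..})"
      unfolding X_def
      by (intro has_vector_derivative_diff d[OF s] bounded_linear.has_vector_derivative[OF bl_adj])
    moreover have "lindblad H L K (\<rho> s) - adj (lindblad H L K (\<rho> s)) = lindblad H L K (X s)"
      by (simp add: X_def lindblad_adj[OF h, symmetric] lindblad_diff)
    ultimately show "(X has_vector_derivative lindblad H L K (X s)) (at s within {0..})" by simp
  qed (rule t)
  thus ?thesis by (simp add: X_def hermitian_def)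
qed

lemma trace_pres:
  fixes \<rho> :: "real \<Rightarrow> 'n::finite cmat"
  assumes d: "\<And>t. t \<ge> 0 \<Longrightarrow> (\<rho> has_vector_derivative lindblad H L K (\<rho> t)) (at t within {0..})"
    and t: "t \<ge> 0"
  shows "trace (\<rho> t) = trace (\<rho> 0)"
proof -
  obtain c where c: "\<And>s. s \<in> {0..} \<Longrightarrow> trace (\<rho> s) = c"
  proof (rule has_vector_derivative_zero_constant[of "{0::real..}" "\<lambda>s. trace (\<rho> s)"])
    show "convex {0::real..}" by (rule convex_real_interval)
    fix s :: real assume "s \<in> {0..}"
    hence "((\<lambda>s. trace (\<rho> s)) has_vector_derivative trace (lindblad H L K (\<rho> s))) (at s within {0..})"
      by (intro bounded_linear.has_vector_derivative[OF bl_trace] d) auto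
    thus "((\<lambda>s. trace (\<rho> s)) has_vector_derivative 0) (at s within {0..})" by (simp add: trace_lindblad)
  qed blast
  show ?thesis using c[of t] c[of 0] t by simp
qed

lemma boundary:
  fixes \<tau> :: "'n::finite cmat"
  assumes p: "psd \<tau>" and z: "\<tau> *v v = 0"
  shows "Re (cinner v (lindblad H L K \<tau> *v v)) \<ge> 0"
proof -
  have h: "hermitian \<tau>" using p psd_herm by blast
  have z2: "cinner v (\<tau> *v w) = 0" for w using herm_cinner[OF h, of v w] z by simp
  have c1: "cinner v (csc (- \<i>) (H ** \<tau> - \<tau> ** H) *v v) = 0"
    by (simp add: mv_csc cinner_smult matrix_vector_mult_diff_rdistrib mv_assoc cinner_diff z z2)
  have c2: "Re (cinner v ((L k ** \<tau> ** adj (L k) - (1/2) *\<^sub>R (adj (L k) ** L k ** \<tau>)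
                      - (1/2) *\<^sub>R (\<tau> ** adj (L k) ** L k)) *v v)) \<ge> 0" for k
  proof -
    have "cinner v (L k *v (\<tau> *v (adj (L k) *v v))) = cinner (adj (L k) *v v) (\<tau> *v (adj (L k) *v v))"
      by (rule cinner_adj)
    moreover have "Re (cinner (adj (L k) *v v) (\<tau> *v (adj (L k) *v v))) \<ge> 0" using p by (simp add: psd_iff)
    ultimately show ?thesis
      by (simp add: matrix_vector_mult_diff_rdistrib mv_scaleR mv_assoc cinner_diff cinner_scaleR z z2)
  qed
  show ?thesis
    unfolding lindblad_def
    by (simp add: matrix_vector_mult_add_rdistrib mv_sum cinner_add cinner_sum c1 Re_sum sum_nonneg c2)
qed

lemma cont_rho:
  fixes \<rho> :: "real \<Rightarrow> 'n::finite cmat"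
  assumes d: "\<And>t. t \<ge> 0 \<Longrightarrow> (\<rho> has_vector_derivative D t) (at t within {0..})"
  shows "continuous_on {0..} \<rho>"
  unfolding continuous_on_eq_continuous_within
  by (auto intro: has_vector_derivative_continuous[OF d])



lemma psd_pres:
  fixes \<rho> :: "real \<Rightarrow> 'n::finite cmat"
  assumes h: "hermitian H"
    and d: "\<And>t. t \<ge> 0 \<Longrightarrow> (\<rho> has_vector_derivative lindblad H L K (\<rho> t)) (at t within {0..})"
    and p0: "psd (\<rho> 0)" and t1: "t1 \<ge> 0"
  shows "psd (\<rho> t1)"
proof -
  have herm: "hermitian (\<rho> t)" if "t \<ge> 0" for t
    using herm_pres[OF h d psd_herm[OF p0] that] by blast
  have crho: "continuous_on {0..} \<rho>" by (rule cont_rho[OF d])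
  define M where "M = lindblad H L K (mat 1)"
  have "compact ((\<lambda>v. Re (cinner v (M *v v))) ` sphere (0::complex^'n) 1)"
    by (rule compact_continuous_image[OF _ compact_sphere]) (intro continuous_intros continuous_on_cform continuous_on_id continuous_on_const)
  hence "bounded ((\<lambda>v. Re (cinner v (M *v v))) ` sphere (0::complex^'n) 1)" by (rule compact_imp_bounded)
  then obtain C where C0: "\<forall>x\<in>(\<lambda>v. Re (cinner v (M *v v))) ` sphere (0::complex^'n) 1. \<bar>x\<bar> \<le> C"
    unfolding bounded_real by blast
  have C: "\<And>v. v \<in> sphere (0::complex^'n) 1 \<Longrightarrow> \<bar>Re (cinner v (M *v v))\<bar> \<le> C"
    using C0 by blast
  define \<alpha> where "\<alpha> = C + 1"
  define hf where "hf \<epsilon> t v = Re (cinner v (\<rho> t *v v)) + \<epsilon> * exp (\<alpha> * t)" for \<epsilon> t v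
  have hcont: "continuous_on (UNIV \<times> {0..}) (\<lambda>p. hf \<epsilon> (snd p) (fst p))" for \<epsilon>
  proof -
    have "continuous_on (UNIV \<times> {0..}) (\<lambda>p::(complex^'n) \<times> real. \<rho> (snd p))"
      by (rule continuous_on_compose2[OF crho continuous_on_snd]) auto
    then show ?thesis unfolding hf_def
      by (intro continuous_intros continuous_on_cform continuous_on_fst continuous_on_id)
  qed
  have hcont1: "continuous_on {0..} (\<lambda>s. hf \<epsilon> s u)" for \<epsilon> u
    unfolding hf_def
    by (intro continuous_intros continuous_on_cform crho continuous_on_const)
  have key: "hf \<epsilon> t v > 0" if ep: "\<epsilon> > 0" and t: "t \<ge> 0" and v: "v \<in> sphere 0 1" for \<epsilon> t v
  proof (rule ccontr)
    assume neg: "\<not> hf \<epsilon> t v > 0"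
    define T where "T = {t. t \<ge> 0 \<and> (\<exists>v\<in>sphere 0 1. hf \<epsilon> t v \<le> 0)}"
    have Tne: "T \<noteq> {}" using neg t v unfolding T_def by force
    have Tb: "bdd_below T" unfolding T_def by (rule bdd_belowI[of _ 0]) auto
    have Tc: "closed T"
    proof -
      define S' where "S' = (UNIV \<times> {0..}) \<inter> (\<lambda>p::(complex^'n) \<times> real. hf \<epsilon> (snd p) (fst p)) -` {..0}"
      have "closed S'" unfolding S'_def
        by (rule continuous_closed_preimage[OF hcont]) (auto intro: closed_Times)
      hence "closed {y. \<exists>x. x \<in> sphere (0::complex^'n) 1 \<and> (x, y) \<in> S'}"
        by (intro closed_compact_projection compact_sphere)
      moreover have "{y. \<exists>x. x \<in> sphere (0::complex^'n) 1 \<and> (x, y) \<in> S'} = T"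
        unfolding S'_def T_def by auto
      ultimately show ?thesis by simp
    qed
    define t0 where "t0 = Inf T"
    have t0T: "t0 \<in> T" unfolding t0_def by (rule closed_contains_Inf[OF Tne Tb Tc])
    have before: "hf \<epsilon> s u > 0" if "0 \<le> s" "s < t0" "u \<in> sphere 0 1" for s u
    proof (rule ccontr)
      assume "\<not> hf \<epsilon> s u > 0"
      hence "s \<in> T" using that unfolding T_def by force
      hence "t0 \<le> s" unfolding t0_def by (rule cInf_lower[OF _ Tb])
      thus False using that by simp
    qed
    have t00: "t0 \<ge> 0" using t0T by (simp add: T_def)
    obtain w where w: "w \<in> sphere 0 1" "hf \<epsilon> t0 w \<le> 0" using t0T by (auto simp: T_def)
    have t0p: "t0 > 0"
    proof (rule ccontr)
      assume "\<not> t0 > 0" hence "t0 = 0" using t00 by simp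
      moreover have "Re (cinner w (\<rho> 0 *v w)) \<ge> 0" using p0 by (simp add: psd_iff)
      ultimately have "hf \<epsilon> t0 w > 0" using ep by (simp add: hf_def)
      thus False using w by simp
    qed
    have nonneg: "hf \<epsilon> t0 u \<ge> 0" if u: "u \<in> sphere 0 1" for u
    proof (rule ccontr)
      assume "\<not> hf \<epsilon> t0 u \<ge> 0"
      hence lt: "hf \<epsilon> t0 u < 0" by simp
      have "continuous (at t0 within {0..}) (\<lambda>s. hf \<epsilon> s u)"
        using hcont1 t00 by (simp add: continuous_on_eq_continuous_within)
      hence "((\<lambda>s. hf \<epsilon> s u) \<longlongrightarrow> hf \<epsilon> t0 u) (at t0 within {0..})"
        by (simp add: continuous_within)
      hence "eventually (\<lambda>s. hf \<epsilon> s u < 0) (at t0 within {0..})"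
        using lt by (rule order_tendstoD)
      then obtain \<delta> where \<delta>: "\<delta> > 0" "\<And>s. s \<in> {0..} \<Longrightarrow> s \<noteq> t0 \<Longrightarrow> dist s t0 < \<delta> \<Longrightarrow> hf \<epsilon> s u < 0"
        unfolding eventually_at by blast
      define s where "s = max 0 (t0 - \<delta>/2)"
      have "hf \<epsilon> s u < 0" using \<delta> t0p by (intro \<delta>(2)) (auto simp: s_def dist_real_def)
      moreover have "hf \<epsilon> s u > 0" using \<delta> t0p u by (intro before) (auto simp: s_def)
      ultimately show False by simp
    qed
    define \<tau> where "\<tau> = \<rho> t0 + mat (complex_of_real (\<epsilon> * exp (\<alpha> * t0)))"
    have qtau: "cinner u (\<tau> *v u) = cinner u (\<rho> t0 *v u) + complex_of_real (\<epsilon> * exp (\<alpha> * t0) * (norm u)^2)" for u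
      by (simp add: \<tau>_def matrix_vector_mult_add_rdistrib mv_mat cinner_add cinner_smult cinner_self)
    have ptau: "psd \<tau>"
      unfolding psd_iff
    proof
      fix u :: "complex^'n"
      have im: "Im (cinner u (\<tau> *v u)) = 0" using herm_qf_real[OF herm[OF t00]] by (simp add: qtau)
      have re: "Re (cinner u (\<tau> *v u)) \<ge> 0"
      proof (cases "u = 0")
        case True thus ?thesis by simp
      next
        case False
        define x where "x = (1 / norm u) *\<^sub>R u"
        have x: "x \<in> sphere 0 1" using False by (simp add: x_def)
        have uu: "u = norm u *\<^sub>R x" using False by (simp add: x_def)
        have "Re (cinner u (\<tau> *v u)) = (norm u)^2 * Re (cinner x (\<tau> *v x))"
          by (subst uu, subst (2) uu) (simp add: cinner_scaleR_both)
        also have "Re (cinner x (\<tau> *v x)) = hf \<epsilon> t0 x" using x by (simp add: qtau hf_def)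
        finally show ?thesis using nonneg[OF x] by simp
      qed
      show "Im (cinner u (\<tau> *v u)) = 0 \<and> Re (cinner u (\<tau> *v u)) \<ge> 0" using im re by simp
    qed
    have "hf \<epsilon> t0 w = 0" using w nonneg[OF w(1)] by simp
    hence "cinner w (\<tau> *v w) = 0"
      using w(1) herm_qf_real[OF herm[OF t00], of w] by (simp add: qtau hf_def complex_eq_iff)
    hence tw: "\<tau> *v w = 0" by (rule psd_kernel[OF ptau])
    have bd: "Re (cinner w (lindblad H L K \<tau> *v w)) \<ge> 0" by (rule boundary[OF ptau tw])
    have Ltau: "lindblad H L K \<tau> = lindblad H L K (\<rho> t0) + (\<epsilon> * exp (\<alpha> * t0)) *\<^sub>R M"
    proof -
      have "mat (complex_of_real (\<epsilon> * exp (\<alpha> * t0))) = (\<epsilon> * exp (\<alpha> * t0)) *\<^sub>R (mat 1 :: 'n cmat)"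
        by (auto simp: mat_def vec_eq_iff of_real_def)
      thus ?thesis by (simp add: \<tau>_def lindblad_add lindblad_scaleR M_def)
    qed
    have "Re (cinner w (lindblad H L K \<tau> *v w)) = Re (cinner w (lindblad H L K (\<rho> t0) *v w))
            + (\<epsilon> * exp (\<alpha> * t0)) * Re (cinner w (M *v w))"
      by (simp add: Ltau matrix_vector_mult_add_rdistrib mv_scaleR cinner_add cinner_scaleR)
    moreover have "(\<epsilon> * exp (\<alpha> * t0)) * Re (cinner w (M *v w)) \<le> (\<epsilon> * exp (\<alpha> * t0)) * C"
      using C[OF w(1)] ep by (intro mult_left_mono) auto
    ultimately have "Re (cinner w (lindblad H L K (\<rho> t0) *v w)) \<ge> - (\<epsilon> * exp (\<alpha> * t0) * C)"
      using bd by linarith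
    define D where "D = Re (cinner w (lindblad H L K (\<rho> t0) *v w)) + \<epsilon> * (\<alpha> * exp (\<alpha> * t0))"
    have Dpos: "D > 0"
    proof -
      have "D \<ge> - (\<epsilon> * exp (\<alpha> * t0) * C) + \<epsilon> * (\<alpha> * exp (\<alpha> * t0))"
        using \<open>Re (cinner w (lindblad H L K (\<rho> t0) *v w)) \<ge> - (\<epsilon> * exp (\<alpha> * t0) * C)\<close> by (simp add: D_def)
      moreover have "- (\<epsilon> * exp (\<alpha> * t0) * C) + \<epsilon> * (\<alpha> * exp (\<alpha> * t0)) = \<epsilon> * exp (\<alpha> * t0)"
        by (simp add: \<alpha>_def algebra_simps)
      moreover have "\<epsilon> * exp (\<alpha> * t0) > 0" using ep by simp
      ultimately show ?thesis by linarith
    qed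
    have "((\<lambda>s. hf \<epsilon> s w) has_real_derivative D) (at t0 within {0..})"
    proof -
      have "((\<lambda>s. Re (cinner w (\<rho> s *v w))) has_vector_derivative Re (cinner w (lindblad H L K (\<rho> t0) *v w))) (at t0 within {0..})"
        by (rule bounded_linear.has_vector_derivative[OF bl_qv d[OF t00]])
      hence "((\<lambda>s. Re (cinner w (\<rho> s *v w))) has_real_derivative Re (cinner w (lindblad H L K (\<rho> t0) *v w))) (at t0 within {0..})"
        by (simp add: has_real_derivative_iff_has_vector_derivative)
      moreover have "((\<lambda>z. \<epsilon> * exp (\<alpha> * z)) has_real_derivative \<epsilon> * (\<alpha> * exp (\<alpha> * t0))) (at t0 within {0..})"
        by (auto intro!: derivative_eq_intros)
      ultimately show ?thesis unfolding hf_def D_def by (rule DERIV_add)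
    qed
    moreover have "at t0 within {0..} = at t0" using t0p by (intro at_within_interior) simp
    ultimately have "DERIV (\<lambda>s. hf \<epsilon> s w) t0 :> D" by simp
    from DERIV_pos_inc_left[OF this Dpos] obtain e where e: "e > 0" "\<And>h. h > 0 \<Longrightarrow> h < e \<Longrightarrow> hf \<epsilon> (t0 - h) w < hf \<epsilon> t0 w"
      by blast
    define hh where "hh = min (e/2) t0"
    have "hf \<epsilon> (t0 - hh) w < hf \<epsilon> t0 w" using e t0p by (intro e(2)) (auto simp: hh_def)
    moreover have "hf \<epsilon> (t0 - hh) w > 0" using e t0p w(1) by (intro before) (auto simp: hh_def)
    ultimately show False using w(2) by simp
  qed
  show ?thesis
    unfolding psd_iff
  proof
    fix u :: "complex^'n"
    have im: "Im (cinner u (\<rho> t1 *v u)) = 0" using herm_qf_real[OF herm[OF t1]] by simp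
    have re: "Re (cinner u (\<rho> t1 *v u)) \<ge> 0"
    proof (cases "u = 0")
      case True thus ?thesis by simp
    next
      case False
      define x where "x = (1 / norm u) *\<^sub>R u"
      have x: "x \<in> sphere 0 1" using False by (simp add: x_def)
      have uu: "u = norm u *\<^sub>R x" using False by (simp add: x_def)
      have eq: "Re (cinner u (\<rho> t1 *v u)) = (norm u)^2 * Re (cinner x (\<rho> t1 *v x))"
        by (subst uu, subst (2) uu) (simp add: cinner_scaleR_both)
      have "Re (cinner x (\<rho> t1 *v x)) \<ge> 0"
      proof (rule ccontr)
        assume "\<not> Re (cinner x (\<rho> t1 *v x)) \<ge> 0"
        hence n: "- Re (cinner x (\<rho> t1 *v x)) > 0" by simp
        define \<epsilon> where "\<epsilon> = - Re (cinner x (\<rho> t1 *v x)) / (2 * exp (\<alpha> * t1))"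
        have "\<epsilon> > 0" using n unfolding \<epsilon>_def by (intro divide_pos_pos) auto
        from key[OF this t1 x] have "Re (cinner x (\<rho> t1 *v x)) + \<epsilon> * exp (\<alpha> * t1) > 0" by (simp add: hf_def)
        moreover have "\<epsilon> * exp (\<alpha> * t1) = - Re (cinner x (\<rho> t1 *v x)) / 2" by (simp add: \<epsilon>_def)
        ultimately show False using n by simp
      qed
      thus ?thesis by (simp add: eq)
    qed
    show "Im (cinner u (\<rho> t1 *v u)) = 0 \<and> Re (cinner u (\<rho> t1 *v u)) \<ge> 0" using im re by simp
  qed
qed



lemma psd_add: "psd A \<Longrightarrow> psd B \<Longrightarrow> psd (A + B)"
  by (simp add: psd_iff matrix_vector_mult_add_rdistrib cinner_add)

lemma gen_add: "gen L S (X + Y) = gen L S X + gen L S Y"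
  unfolding gen_def gen_comp_def
  by (simp add: matrix_add_ldistrib mm_add_r scaleR_add_right sum.distrib[symmetric] algebra_simps)

lemma gen_scaleR: "gen L S ((r::real) *\<^sub>R X) = r *\<^sub>R gen L S X"
  unfolding gen_def gen_comp_def
  by (simp add: mm_scaleR_l mm_scaleR_r scaleR_sum_right algebra_simps)

lemma gen_diff: "gen L S (X - Y) = gen L S X - gen L S Y"
  using gen_add[of L S "X - Y" Y] by (simp add: algebra_simps)

lemma gen_mat1: "gen L S (mat 1) = 0"
  unfolding gen_def gen_comp_def by simp

lemma mat_of_real: "mat (complex_of_real r) = r *\<^sub>R (mat 1 :: 'n::finite cmat)"
  by (auto simp: mat_def vec_eq_iff of_real_def)

lemma gen_split: "M \<le> K \<Longrightarrow> gen L {1..K} X = gen L {1..M} X + gen L {M+1..K} X"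
proof -
  assume MK: "M \<le> K"
  have "{1..K} = {1..M} \<union> {M+1..K}" using MK by auto
  moreover have "{1..M} \<inter> {M+1..K} = {}" by auto
  ultimately show ?thesis unfolding gen_def by (simp add: sum.union_disjoint)
qed

lemma herm_sum: "(\<And>l. l \<in> S \<Longrightarrow> hermitian (A l)) \<Longrightarrow> hermitian (\<Sum>l\<in>S. A l)"
  unfolding hermitian_def by (simp add: adj_sum)

lemma exp_neg_tendsto: "(c::real) > 0 \<Longrightarrow> ((\<lambda>t. exp (- c * t)) \<longlongrightarrow> 0) at_top"
  by (rule filterlim_compose[OF exp_at_bot], rule filterlim_tendsto_neg_mult_at_bot[OF tendsto_const])
     (auto intro: filterlim_ident)

theorem theorem19:
  fixes H :: "'n::finite cmat" and W L :: "nat \<Rightarrow> 'n cmat"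
    and N M K n :: nat and c :: real
  defines "Wt \<equiv> (\<lambda>m. \<Sum>l\<in>{1..m}. W l)"
  defines "d \<equiv> (\<lambda>m. min_eig (Wt m))"
  assumes H_herm: "hermitian H"
    and W_herm: "\<And>l. l \<in> {1..N} \<Longrightarrow> hermitian (W l)"
    and W_comm: "\<And>l. l \<in> {1..N} \<Longrightarrow> W l ** H = H ** W l"
    and W_psd: "\<And>l. l \<in> {1..N} \<Longrightarrow> psd (W l)"
    and W_min: "\<And>l. l \<in> {1..N} \<Longrightarrow> min_eig (W l) = 0"
    and n: "1 \<le> n" "n < N"
    and MK: "M \<le> K"
    and c: "c > 0"
    and hypM: "loewner_le (gen L {1..M} (Wt n - mat (complex_of_real (d n))))
                          ((- c) *\<^sub>R (Wt n - mat (complex_of_real (d n))))"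
    and hypK: "loewner_le (gen L {1..K} (W (n+1)) + gen L {M+1..K} (Wt n))
                          ((- c) *\<^sub>R W (n+1) + mat (complex_of_real (c * (d (n+1) - d n))))"
  shows "gs_stable H L K (Wt (n+1))"
proof -
  have Wsplit: "Wt (n+1) = Wt n + W (n+1)" unfolding Wt_def by simp
  have hW: "hermitian (Wt (n+1))" unfolding Wt_def using n by (intro herm_sum W_herm) auto
  define Y where "Y = Wt (n+1) - mat (complex_of_real (d (n+1)))"
  have psdY: "psd Y" unfolding Y_def d_def by (rule herm_min_eig[OF hW])
  have commW: "Wt (n+1) ** H = H ** Wt (n+1)" unfolding Wt_def mm_sum_l mm_sum_r
    by (rule sum.cong[OF refl], rule W_comm) (use n in auto)
  have commY: "Y ** H = H ** Y"
    using commW by (simp add: Y_def mm_diff_l mm_diff_r mat_mm mm_mat)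
  define G where "G = gen L {1..K} Y"
  have psdQ: "psd ((- c) *\<^sub>R Y - G)"
  proof -
    have A: "psd ((- c) *\<^sub>R (Wt n - d n *\<^sub>R mat 1) - gen L {1..M} (Wt n - d n *\<^sub>R mat 1))"
      using hypM unfolding loewner_le_def mat_of_real .
    have B: "psd ((- c) *\<^sub>R W (n+1) + (c * (d (n+1) - d n)) *\<^sub>R mat 1 - (gen L {1..K} (W (n+1)) + gen L {M+1..K} (Wt n)))"
      using hypK unfolding loewner_le_def mat_of_real .
    have "(- c) *\<^sub>R Y - G = ((- c) *\<^sub>R (Wt n - d n *\<^sub>R mat 1) - gen L {1..M} (Wt n - d n *\<^sub>R mat 1))
        + ((- c) *\<^sub>R W (n+1) + (c * (d (n+1) - d n)) *\<^sub>R mat 1 - (gen L {1..K} (W (n+1)) + gen L {M+1..K} (Wt n)))"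
      unfolding G_def Y_def Wsplit mat_of_real
      by (simp add: gen_add gen_diff gen_scaleR gen_mat1 algebra_simps)
         (use gen_split[OF MK, of L "Wt n"] in simp)
    thus ?thesis using psd_add[OF A B] by simp
  qed
  show ?thesis
    unfolding gs_stable_def
  proof (intro allI impI)
    fix \<rho> :: "real \<Rightarrow> 'n cmat"
    assume asm: "density (\<rho> 0) \<and> (\<forall>t\<ge>0. (\<rho> has_vector_derivative lindblad H L K (\<rho> t)) (at t within {0..}))"
    have p0: "psd (\<rho> 0)" and tr0: "trace (\<rho> 0) = 1" using asm by (auto simp: density_def)
    have dd: "\<And>t. t \<ge> 0 \<Longrightarrow> (\<rho> has_vector_derivative lindblad H L K (\<rho> t)) (at t within {0..})"
      using asm by blast
    have pt: "psd (\<rho> t)" if "t \<ge> 0" for t by (rule psd_pres[OF H_herm dd p0 that])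
    have trt: "trace (\<rho> t) = 1" if "t \<ge> 0" for t using trace_pres[OF dd that] tr0 by simp
    define f where "f t = Re (trace (Y ** \<rho> t))" for t
    have fIm: "Im (trace (Y ** \<rho> t)) = 0" if "t \<ge> 0" for t using trace_psd(1)[OF psdY pt[OF that]] .
    have fnn: "f t \<ge> 0" if "t \<ge> 0" for t using trace_psd(2)[OF psdY pt[OF that]] by (simp add: f_def)
    have fd: "(f has_real_derivative Re (trace (G ** \<rho> t))) (at t within {0..})" if "t \<ge> 0" for t
    proof -
      have "((\<lambda>s. Re (trace (Y ** \<rho> s))) has_vector_derivative Re (trace (Y ** lindblad H L K (\<rho> t)))) (at t within {0..})"
        by (rule bounded_linear.has_vector_derivative[OF bounded_linear_compose[OF bounded_linear_Re bl_trace_mul] dd[OF that]])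
      moreover have "f = (\<lambda>s. Re (trace (Y ** \<rho> s)))" by (simp add: fun_eq_iff f_def)
      ultimately show ?thesis by (simp add: has_real_derivative_iff_has_vector_derivative trace_dual[OF commY] G_def)
    qed
    have fn: "Re (trace (G ** \<rho> t)) \<le> (- c) * f t" if "t \<ge> 0" for t
    proof -
      have "Re (trace (((- c) *\<^sub>R Y - G) ** \<rho> t)) \<ge> 0" by (rule trace_psd(2)[OF psdQ pt[OF that]])
      thus ?thesis by (simp add: mm_diff_r mm_scaleR_l trace_sub trace_scaleR f_def del: scaleR_minus_left)
    qed
    have fb: "f t \<le> exp (- c * t) * f 0" if "t \<ge> 0" for t by (rule gronwall[OF fd fn that])
    have flim: "(f \<longlongrightarrow> 0) at_top"
    proof (rule tendsto_sandwich[of "\<lambda>_. 0" f _ "\<lambda>t. exp (- c * t) * f 0"])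
      show "eventually (\<lambda>t. 0 \<le> f t) at_top" using eventually_ge_at_top[of 0] by eventually_elim (rule fnn)
      show "eventually (\<lambda>t. f t \<le> exp (- c * t) * f 0) at_top" using eventually_ge_at_top[of 0] by eventually_elim (rule fb)
      show "((\<lambda>t. exp (- c * t) * f 0) \<longlongrightarrow> 0) at_top"
        using tendsto_mult_left_zero[OF exp_neg_tendsto[OF c], of "f 0"] by simp
    qed simp
    have ev: "eventually (\<lambda>t. complex_of_real (f t) + complex_of_real (d (n+1)) = trace (Wt (n+1) ** \<rho> t)) at_top"
      using eventually_ge_at_top[of 0]
    proof eventually_elim
      case (elim t)
      have "Wt (n+1) = Y + mat (complex_of_real (d (n+1)))" by (simp add: Y_def)
      hence "trace (Wt (n+1) ** \<rho> t) = trace (Y ** \<rho> t) + complex_of_real (d (n+1)) * trace (\<rho> t)"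
        by (simp add: mm_add_r trace_add mat_mm trace_csc)
      also have "\<dots> = complex_of_real (f t) + complex_of_real (d (n+1))"
        using trt[OF elim] fIm[OF elim] by (simp add: f_def complex_eq_iff)
      finally show ?case by simp
    qed
    have "((\<lambda>t. complex_of_real (f t) + complex_of_real (d (n+1))) \<longlongrightarrow> complex_of_real (d (n+1))) at_top"
      using tendsto_add[OF tendsto_of_real[OF flim] tendsto_const[of "complex_of_real (d (n+1))"]] by simp
    from Lim_transform_eventually[OF this ev]
    show "((\<lambda>t. trace (Wt (n+1) ** \<rho> t)) \<longlongrightarrow> complex_of_real (min_eig (Wt (n+1)))) at_top"
      by (simp add: d_def)
  qed
qed


end
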